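(* Let $M$ be a connected molecular graph (i.e. a connected simple graph with maximum vertex degree at most $4$) with $n\geq 3$ vertices, and let $G\cong L(M)$ be its line graph. Then $GA(G)>ABC(G)$.
   Context: All graphs are finite, simple and undirected. For a graph $G$ with vertex degrees $d_i$ (degree of vertex $v_i$), the first geometric-arithmetic index is $GA(G)=\sum_{v_iv_j\in E(G)}\frac{2\sqrt{d_id_j}}{d_i+d_j}$ and the atom-bond connectivity index is $ABC(G)=\sum_{v_iv_j\in E(G)}\sqrt{\frac{d_i+d_j-2}{d_id_j}}$. The line graph $L(M)$ has vertex set $E(M)$, two vertices being adjacent iff the corresponding edges of $M$ share an endpoint. *)

theory Defs
  imports Complex_Main
begin

definition simple_graph :: "'a set \<Rightarrow> 'a set set \<Rightarrow> bool" where
  "simple_graph V E \<longleftrightarrow> finite V \<and>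
     (\<forall>e\<in>E. \<exists>u v. u \<in> V \<and> v \<in> V \<and> u \<noteq> v \<and> e = {u, v})"

definition degree :: "'a set set \<Rightarrow> 'a \<Rightarrow> nat" where
  "degree E v = card {e \<in> E. v \<in> e}"

definition adjacent :: "'a set set \<Rightarrow> 'a \<Rightarrow> 'a \<Rightarrow> bool" where
  "adjacent E u v \<longleftrightarrow> {u, v} \<in> E"

definition connected_graph :: "'a set \<Rightarrow> 'a set set \<Rightarrow> bool" where
  "connected_graph V E \<longleftrightarrow> V \<noteq> {} \<and> (\<forall>u\<in>V. \<forall>v\<in>V. (adjacent E)\<^sup>*\<^sup>* u v)"

definition molecular_graph :: "'a set \<Rightarrow> 'a set set \<Rightarrow> bool" where
  "molecular_graph V E \<longleftrightarrow> simple_graph V E \<and> connected_graph V E \<and>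
     (\<forall>v\<in>V. degree E v \<le> 4)"

definition line_graph_vertices :: "'a set set \<Rightarrow> 'a set set" where
  "line_graph_vertices E = E"

definition line_graph_edges :: "'a set set \<Rightarrow> 'a set set set" where
  "line_graph_edges E = {{e, f} | e f. e \<in> E \<and> f \<in> E \<and> e \<noteq> f \<and> e \<inter> f \<noteq> {}}"

text \<open>For an edge e = {v_i, v_j} we have d_i d_j = prod over e of degrees and
  d_i + d_j = sum over e of degrees.\<close>
definition GA_index :: "'a set set \<Rightarrow> real" where
  "GA_index E = (\<Sum>e\<in>E. 2 * sqrt (\<Prod>x\<in>e. real (degree E x)) / (\<Sum>x\<in>e. real (degree E x)))"

definition ABC_index :: "'a set set \<Rightarrow> real" where
  "ABC_index E = (\<Sum>e\<in>E. sqrt (((\<Sum>x\<in>e. real (degree E x)) - 2) / (\<Prod>x\<in>e. real (degree E x))))"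

end

theory Submission
  imports Defs
begin

definition Hf :: "nat \<Rightarrow> nat \<Rightarrow> real" where
  "Hf a b = 2 * sqrt (real a * real b) / (real a + real b) - sqrt ((real a + real b - 2) / (real a * real b))"

lemma Hf_sym: "Hf a b = Hf b a"
  unfolding Hf_def by (simp add: ac_simps)

lemma Hf_pos_gen:
  assumes "a \<ge> 1" "b \<ge> 1" "(a + b - 2) * (a + b)^2 < 4 * a^2 * b^2"
  shows "Hf a b > 0"
proof -
  have ra: "real a \<ge> 1" "real b \<ge> 1" using assms by auto
  have c: "(real a + real b - 2) * (real a + real b)^2 < 4 * (real a)^2 * (real b)^2"
  proof -
    have "real ((a + b - 2) * (a + b)^2) < real (4 * a^2 * b^2)" using assms(3) by linarith
    moreover have "real (a + b - 2) = real a + real b - 2" using assms by auto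
    ultimately show ?thesis by simp
  qed
  have e1: "2 * sqrt (real a * real b) / (real a + real b) = sqrt (4 * real a * real b / (real a + real b)^2)"
    using ra by (simp add: real_sqrt_divide real_sqrt_mult)
  have "(real a + real b - 2) / (real a * real b) < 4 * real a * real b / (real a + real b)^2"
  proof -
    have p1: "0 < (real a + real b)^2" "0 < real a * real b" using ra by auto
    show ?thesis using c p1 by (simp add: divide_less_eq less_divide_eq mult.commute mult.left_commute power2_eq_square)
  qed
  hence "sqrt ((real a + real b - 2) / (real a * real b)) < sqrt (4 * real a * real b / (real a + real b)^2)"
    by (simp add: real_sqrt_less_iff)
  thus ?thesis unfolding Hf_def e1 by simp
qed

lemma Hf_pos:
  assumes "1 \<le> a" "a \<le> 6" "1 \<le> b" "b \<le> 6" "\<not> (a = 1 \<and> b \<ge> 4)" "\<not> (b = 1 \<and> a \<ge> 4)"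
  shows "Hf a b > 0"
proof (rule Hf_pos_gen)
  have "a \<in> {1,2,3,4,5,6}" "b \<in> {1,2,3,4,5,6}" using assms by auto
  hence "(a + b - 2) * ((a + b) * (a + b)) < 4 * (a * a) * (b * b)" using assms(5,6)
    by auto
  thus "(a + b - 2) * (a + b)^2 < 4 * a^2 * b^2" by (simp add: power2_eq_square)
qed (use assms in auto)

lemma Hf_14: "Hf 1 4 \<ge> -1/10"
proof -
  have "sqrt (3/4) \<le> 9/10" by (rule real_le_lsqrt) (auto simp: power2_eq_square)
  moreover have "sqrt (4::real) = 2" by (simp add: real_sqrt_eq_iff power2_eq_square[symmetric])
  ultimately show ?thesis unfolding Hf_def by simp
qed

lemma Hf_4k:
  assumes "3 \<le> k" "k \<le> 6"
  shows "Hf 4 k \<ge> 1/10"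
proof -
  have k: "real k \<ge> 3" "real k \<le> 6" using assms by auto
  have s1: "sqrt ((4 + real k - 2) / (4 * real k)) \<le> 7/10"
    by (rule real_le_lsqrt) (use k in \<open>auto simp: field_simps power2_eq_square\<close>)
  have "2/5 * (4 + real k) \<le> sqrt (4 * real k)"
  proof (rule real_le_rsqrt)
    have "real k \<in> {3,4,5,6}" using assms by auto
    thus "(2/5 * (4 + real k))^2 \<le> 4 * real k" by (auto simp: power2_eq_square)
  qed
  hence s2: "2 * sqrt (4 * real k) / (4 + real k) \<ge> 4/5" using k by (simp add: field_simps)
  show ?thesis unfolding Hf_def using s1 s2 by simp
qed

definition nbr :: "'a set set \<Rightarrow> 'a set \<Rightarrow> 'a set set" where
  "nbr E x = {y \<in> E. y \<noteq> x \<and> x \<inter> y \<noteq> {}}"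

lemma LE_mem: "x \<noteq> y \<Longrightarrow> {x, y} \<in> line_graph_edges E \<longleftrightarrow> x \<in> E \<and> y \<in> E \<and> x \<inter> y \<noteq> {}"
  unfolding line_graph_edges_def by (auto simp: doubleton_eq_iff)

lemma LE_elem: "e \<in> line_graph_edges E \<Longrightarrow> \<exists>x y. e = {x, y} \<and> x \<in> E \<and> y \<in> E \<and> x \<noteq> y \<and> x \<inter> y \<noteq> {}"
  unfolding line_graph_edges_def by auto

lemma deg_nbr:
  assumes "finite E" "x \<in> E"
  shows "degree (line_graph_edges E) x = card (nbr E x)"
proof -
  have "{e \<in> line_graph_edges E. x \<in> e} = (\<lambda>y. {x, y}) ` nbr E x"
  proof
    show "{e \<in> line_graph_edges E. x \<in> e} \<subseteq> (\<lambda>y. {x, y}) ` nbr E x"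
    proof
      fix e assume "e \<in> {e \<in> line_graph_edges E. x \<in> e}"
      hence eL: "e \<in> line_graph_edges E" "x \<in> e" by simp_all
      obtain f g where e0: "e = {f, g}" "f \<in> E" "g \<in> E" "f \<noteq> g" "f \<inter> g \<noteq> {}"
        using LE_elem[OF eL(1)] by blast
      note e = e0 eL(2)
      show "e \<in> (\<lambda>y. {x, y}) ` nbr E x"
      proof (cases "x = f")
        case True
        hence "g \<in> nbr E x" using e by (simp add: nbr_def)
        moreover have "e = {x, g}" using e True by simp
        ultimately show ?thesis by (rule rev_image_eqI)
      next
        case False hence xg: "x = g" using e by auto
        hence "f \<in> nbr E x" using e by (auto simp: nbr_def)
        moreover have "e = {x, f}" using e xg by (simp add: insert_commute)
        ultimately show ?thesis by (rule rev_image_eqI)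
      qed
    qed
  next
    show "(\<lambda>y. {x, y}) ` nbr E x \<subseteq> {e \<in> line_graph_edges E. x \<in> e}"
    proof
      fix e assume "e \<in> (\<lambda>y. {x, y}) ` nbr E x"
      then obtain y where y: "y \<in> nbr E x" "e = {x, y}" by (rule imageE) simp
      hence "{x, y} \<in> line_graph_edges E" using assms by (subst LE_mem) (auto simp: nbr_def)
      thus "e \<in> {e \<in> line_graph_edges E. x \<in> e}" using y by simp
    qed
  qed
  moreover have "inj_on (\<lambda>y. {x, y}) (nbr E x)"
  proof
    fix y z assume "y \<in> nbr E x" "z \<in> nbr E x" "{x, y} = {x, z}"
    thus "y = z" by (auto simp: nbr_def doubleton_eq_iff)
  qed
  ultimately show ?thesis unfolding degree_def by (simp add: card_image)
qed

lemma LE_finite: "finite E \<Longrightarrow> finite (line_graph_edges E)"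
  by (rule finite_subset[of _ "Pow E"]) (auto simp: line_graph_edges_def)

lemma nbr_finite: "finite E \<Longrightarrow> finite (nbr E x)"
  unfolding nbr_def by simp

locale mg =
  fixes E :: "'a set set"
  assumes fin: "finite E"
    and two: "\<And>e. e \<in> E \<Longrightarrow> \<exists>a b. a \<noteq> b \<and> e = {a, b}"
    and deg4: "\<And>e a. e \<in> E \<Longrightarrow> a \<in> e \<Longrightarrow> card {f \<in> E. a \<in> f} \<le> 4"
begin

lemma card_at_minus: "x \<in> E \<Longrightarrow> a \<in> x \<Longrightarrow> card ({f \<in> E. a \<in> f} - {x}) \<le> 3"
  using deg4[of x a] fin by (simp add: card_Diff_singleton)

lemma nbr_le6: assumes "x \<in> E" shows "card (nbr E x) \<le> 6"
proof -
  obtain a b where ab: "a \<noteq> b" "x = {a, b}" using two assms by blast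
  have "nbr E x \<subseteq> ({f \<in> E. a \<in> f} - {x}) \<union> ({f \<in> E. b \<in> f} - {x})"
    using ab by (auto simp: nbr_def)
  hence "card (nbr E x) \<le> card (({f \<in> E. a \<in> f} - {x}) \<union> ({f \<in> E. b \<in> f} - {x}))"
    using fin by (intro card_mono) auto
  also have "\<dots> \<le> card ({f \<in> E. a \<in> f} - {x}) + card ({f \<in> E. b \<in> f} - {x})"
    by (rule card_Un_le)
  also have "\<dots> \<le> 6" using card_at_minus[OF assms, of a] card_at_minus[OF assms, of b] ab by simp
  finally show ?thesis .
qed

lemma pendant:
  assumes p: "p \<in> E" and q: "q \<in> E" and pq: "p \<noteq> q" "p \<inter> q \<noteq> {}" and np: "nbr E p = {q}"
  shows "card (nbr E q) \<le> 4 \<and> (card (nbr E q) = 4 \<longrightarrow> (\<forall>r\<in>nbr E q. r \<noteq> p \<longrightarrow> card (nbr E r) \<ge> 3))"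
proof -
  obtain a b where ab: "a \<noteq> b" "q = {a, b}" using two q by blast
  obtain v w where vw: "v \<noteq> w" "q = {v, w}" "v \<in> p"
  proof (cases "a \<in> p")
    case True thus ?thesis using that ab by blast
  next
    case False hence "b \<in> p" using pq ab by auto
    thus ?thesis using that ab by (metis insert_commute)
  qed
  have key: "w \<in> r" if r: "r \<in> nbr E q" "r \<noteq> p" for r
  proof -
    have rE: "r \<in> E" "r \<noteq> q" "q \<inter> r \<noteq> {}" using r by (auto simp: nbr_def)
    have "r \<inter> p = {}"
    proof (rule ccontr)
      assume "r \<inter> p \<noteq> {}"
      hence "r \<in> nbr E p" using rE r by (auto simp: nbr_def)
      thus False using np rE by auto
    qed
    thus ?thesis using rE vw by auto
  qed
  have sub: "nbr E q \<subseteq> {p} \<union> ({f \<in> E. w \<in> f} - {q})"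
    using key by (auto simp: nbr_def)
  have "card (nbr E q) \<le> card ({p} \<union> ({f \<in> E. w \<in> f} - {q}))"
    using fin by (intro card_mono[OF _ sub]) auto
  also have "\<dots> \<le> card {p} + card ({f \<in> E. w \<in> f} - {q})" by (rule card_Un_le)
  also have "\<dots> \<le> 4" using card_at_minus[OF q, of w] vw by simp
  finally have c4: "card (nbr E q) \<le> 4" .
  moreover have "card (nbr E r) \<ge> 3" if c: "card (nbr E q) = 4" and r: "r \<in> nbr E q" "r \<noteq> p" for r
  proof -
    define S where "S = nbr E q - {p, r}"
    have "card (nbr E q) - card {p, r} \<le> card S" unfolding S_def by (rule diff_card_le_card_Diff) simp
    moreover have "card {p, r} \<le> 2" by (rule card_insert_le_m1) auto
    ultimately have cS: "card S \<ge> 2" using c by simp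
    have qS: "q \<notin> S" by (auto simp: S_def nbr_def)
    have rE: "r \<in> E" "r \<noteq> q" "q \<inter> r \<noteq> {}" using r by (auto simp: nbr_def)
    have "insert q S \<subseteq> nbr E r"
    proof
      fix s assume "s \<in> insert q S"
      then consider "s = q" | "s \<in> S" by blast
      thus "s \<in> nbr E r"
      proof cases
        case 1 thus ?thesis using rE q by (auto simp: nbr_def)
      next
        case 2
        hence "s \<in> nbr E q" "s \<noteq> p" "s \<noteq> r" by (auto simp: S_def)
        hence "w \<in> s" "s \<in> E" using key by (auto simp: nbr_def)
        thus ?thesis using key[OF r] \<open>s \<noteq> r\<close> by (auto simp: nbr_def)
      qed
    qed
    hence "card (insert q S) \<le> card (nbr E r)" using nbr_finite[OF fin] by (intro card_mono) auto
    moreover have "card (insert q S) = Suc (card S)"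
      using qS by (simp add: S_def nbr_finite[OF fin])
    ultimately show ?thesis using cS by simp
  qed
  ultimately show ?thesis by blast
qed

end

definition hh :: "'a set set \<Rightarrow> 'a set \<Rightarrow> real" where
  "hh L e = 2 * sqrt (\<Prod>x\<in>e. real (degree L x)) / (\<Sum>x\<in>e. real (degree L x))
     - sqrt (((\<Sum>x\<in>e. real (degree L x)) - 2) / (\<Prod>x\<in>e. real (degree L x)))"

lemma GA_ABC: "GA_index L - ABC_index L = sum (hh L) L"
  unfolding GA_index_def ABC_index_def hh_def by (simp add: sum_subtractf)

lemma hh_pair: "x \<noteq> y \<Longrightarrow> hh L {x, y} = Hf (degree L x) (degree L y)"
  unfolding hh_def Hf_def by simp

lemma LE_nonempty:
  assumes sg: "simple_graph V E" and conn: "connected_graph V E" and c3: "card V \<ge> 3"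
  shows "line_graph_edges E \<noteq> {}"
proof
  assume L0: "line_graph_edges E = {}"
  have disj: "e = f" if "e \<in> E" "f \<in> E" "e \<inter> f \<noteq> {}" for e f
  proof (rule ccontr)
    assume "e \<noteq> f"
    hence "{e, f} \<in> line_graph_edges E" using that by (subst LE_mem) auto
    thus False using L0 by simp
  qed
  have finV: "finite V" using sg by (simp add: simple_graph_def)
  have "V \<noteq> {}" using c3 by auto
  then obtain a where a: "a \<in> V" by blast
  have "\<not> V \<subseteq> {a}" using c3 card_mono[OF _ , of "{a}" V] by auto
  then obtain b where b: "b \<in> V" "b \<noteq> a" by blast
  have "(adjacent E)\<^sup>*\<^sup>* a b" using conn a b by (simp add: connected_graph_def)
  then obtain c where ac: "adjacent E a c"
    using b(2) by (metis converse_rtranclpE)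
  hence acE: "{a, c} \<in> E" by (simp add: adjacent_def)
  have "\<not> V \<subseteq> {a, c}"
  proof
    assume "V \<subseteq> {a, c}"
    hence "card V \<le> card {a, c}" by (intro card_mono) auto
    also have "\<dots> \<le> 2" by (rule card_insert_le_m1) auto
    finally show False using c3 by simp
  qed
  then obtain d where d: "d \<in> V" "d \<notin> {a, c}" by blast
  have ad: "(adjacent E)\<^sup>*\<^sup>* a d" using conn a d by (simp add: connected_graph_def)
  have "z \<in> {a, c}" if "(adjacent E)\<^sup>*\<^sup>* a z" for z
    using that
  proof (induction rule: rtranclp_induct)
    case base thus ?case by simp
  next
    case (step y z)
    hence yz: "{y, z} \<in> E" by (simp add: adjacent_def)
    have "{y, z} \<inter> {a, c} \<noteq> {}" using step by auto
    hence "{y, z} = {a, c}" using disj[OF yz acE] by simp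
    thus ?case by auto
  qed
  thus False using ad d by blast
qed

theorem theorem3p2:
  fixes V :: "'a set" and E :: "'a set set"
  assumes "molecular_graph V E"
    and "card V \<ge> 3"
  shows "GA_index (line_graph_edges E) > ABC_index (line_graph_edges E)"
proof -
  have sg: "simple_graph V E" and conn: "connected_graph V E" and dV: "\<forall>v\<in>V. degree E v \<le> 4"
    using assms(1) by (auto simp: molecular_graph_def)
  have finV: "finite V" using sg by (simp add: simple_graph_def)
  have sgE: "\<exists>u v. u \<in> V \<and> v \<in> V \<and> u \<noteq> v \<and> e = {u, v}" if "e \<in> E" for e
    using sg that unfolding simple_graph_def by blast
  have EV: "e \<subseteq> V" if eE: "e \<in> E" for e
  proof -
    obtain u v where "u \<in> V" "v \<in> V" "e = {u, v}" using sgE[OF eE] by blast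
    thus ?thesis by simp
  qed
  have finE: "finite E" by (rule finite_subset[of _ "Pow V"]) (use EV finV in auto)
  have two: "\<exists>a b. a \<noteq> b \<and> e = {a, b}" if eE: "e \<in> E" for e
  proof -
    obtain u v where "u \<noteq> v" "e = {u, v}" using sgE[OF eE] by blast
    thus ?thesis by blast
  qed
  have deg4: "card {f \<in> E. a \<in> f} \<le> 4" if "e \<in> E" "a \<in> e" for e a
    using dV EV[OF that(1)] that(2) by (auto simp: degree_def)
  interpret mg E using finE two deg4 by unfold_locales auto
  define L where "L = line_graph_edges E"
  define d where "d = degree L"
  have finL: "finite L" unfolding L_def by (rule LE_finite[OF finE])
  have Lne: "L \<noteq> {}" unfolding L_def by (rule LE_nonempty[OF sg conn assms(2)])
  have dN: "d x = card (nbr E x)" if "x \<in> E" for x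
    unfolding d_def L_def using deg_nbr[OF finE that] .
  have d6: "d x \<le> 6" if "x \<in> E" for x using dN[OF that] nbr_le6[OF that] by simp
  have nbrE: "y \<in> E" "y \<noteq> x" "x \<inter> y \<noteq> {}" if "y \<in> nbr E x" for x y
    using that by (auto simp: nbr_def)
  have nbr_sym: "x \<in> nbr E y" if "y \<in> nbr E x" "x \<in> E" for x y
    using that by (auto simp: nbr_def)
  have d1: "nbr E x = {y}" if "x \<in> E" "d x = 1" "y \<in> nbr E x" for x y
  proof -
    have "card (nbr E x) = 1" using dN[OF that(1)] that(2) by simp
    then obtain z where "nbr E x = {z}" by (rule card_1_singletonE)
    thus ?thesis using that(3) by simp
  qed
  have dpos: "d x \<ge> 1" if "x \<in> E" "y \<in> nbr E x" for x y
  proof -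
    have "card (nbr E x) > 0" using that nbr_finite[OF finE] by (auto simp: card_gt_0_iff)
    thus ?thesis using dN[OF that(1)] by simp
  qed
  have EL: "\<exists>x y. e = {x, y} \<and> x \<in> E \<and> y \<in> E \<and> x \<noteq> y \<and> y \<in> nbr E x \<and> x \<in> nbr E y"
    if eL0: "e \<in> L" for e
  proof -
    obtain x y where "e = {x, y}" "x \<in> E" "y \<in> E" "x \<noteq> y" "x \<inter> y \<noteq> {}"
      using LE_elem[OF eL0[unfolded L_def]] by blast
    thus ?thesis by (auto simp: nbr_def)
  qed
  have pairL: "{x, y} \<in> L" if "y \<in> nbr E x" "x \<in> E" for x y
    unfolding L_def using that by (subst LE_mem) (auto simp: nbr_def)
  have hv: "hh L {x, y} = Hf (d x) (d y)" if "x \<noteq> y" for x y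
    unfolding d_def using hh_pair[OF that] .
  have pend: "d q \<le> 4 \<and> (d q = 4 \<longrightarrow> (\<forall>r\<in>nbr E q. r \<noteq> p \<longrightarrow> d r \<ge> 3))"
    if "p \<in> E" "q \<in> nbr E p" "d p = 1" for p q
  proof -
    have np: "nbr E p = {q}" using d1[OF that(1) that(3) that(2)] .
    have q: "q \<in> E" "q \<noteq> p" "p \<inter> q \<noteq> {}" using nbrE[OF that(2)] by auto
    have "card (nbr E q) \<le> 4 \<and> (card (nbr E q) = 4 \<longrightarrow> (\<forall>r\<in>nbr E q. r \<noteq> p \<longrightarrow> card (nbr E r) \<ge> 3))"
      using pendant[OF that(1) q(1) _ q(3) np] q(2) by auto
    thus ?thesis using dN q(1) nbrE by auto
  qed
  define B where "B = {e \<in> L. \<exists>x y. e = {x, y} \<and> d x = 1 \<and> d y = 4}"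
  define Q where "Q = {q \<in> E. d q = 4 \<and> (\<exists>p\<in>nbr E q. d p = 1)}"
  have BL: "B \<subseteq> L" unfolding B_def by auto
  have finB: "finite B" using finite_subset[OF BL finL] .
  have finQ: "finite Q" using finE unfolding Q_def by simp
  have P1: "hh L e > 0" if eLB0: "e \<in> L - B" for e
  proof -
    obtain x y where e: "e = {x, y}" "x \<in> E" "y \<in> E" "x \<noteq> y" "y \<in> nbr E x" "x \<in> nbr E y"
      using EL[OF DiffD1[OF eLB0]] by blast
    have r: "1 \<le> d x" "d x \<le> 6" "1 \<le> d y" "d y \<le> 6"
      using dpos[OF e(2) e(5)] dpos[OF e(3) e(6)] d6 e(2,3) by auto
    have c1: "\<not> (d x = 1 \<and> d y \<ge> 4)"
    proof
      assume a: "d x = 1 \<and> d y \<ge> 4"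
      hence "d y \<le> 4" using pend[OF e(2) e(5)] by blast
      hence "d y = 4" using a by simp
      hence "e \<in> B" using that a e(1) unfolding B_def by blast
      thus False using that by simp
    qed
    have c2: "\<not> (d y = 1 \<and> d x \<ge> 4)"
    proof
      assume a: "d y = 1 \<and> d x \<ge> 4"
      hence "d x \<le> 4" using pend[OF e(3) e(6)] by blast
      hence "d x = 4" using a by simp
      hence "e = {y, x} \<and> d y = 1 \<and> d x = 4" using a e(1) by (simp add: insert_commute)
      hence "e \<in> B" using that unfolding B_def by blast
      thus False using that by simp
    qed
    show ?thesis using Hf_pos[OF r c1 c2] hv[OF e(4)] e(1) by simp
  qed
  have P2: "hh L e \<ge> -1/10" if eB0: "e \<in> B" for e
  proof -
    obtain x y where e: "e = {x, y}" "d x = 1" "d y = 4" using eB0 unfolding B_def by blast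
    have "x \<noteq> y" using e by auto
    thus ?thesis using hv e Hf_14 by simp
  qed
  have Qstr: "\<exists>p. p \<in> nbr E q \<and> d p = 1 \<and> nbr E p = {q} \<and> (\<forall>r\<in>nbr E q. r \<noteq> p \<longrightarrow> d r \<ge> 3)"
    if qQ0: "q \<in> Q" for q
  proof -
    obtain p where p: "p \<in> nbr E q" "d p = 1" "q \<in> E" "d q = 4" using qQ0 unfolding Q_def by blast
    have pE: "p \<in> E" using nbrE[OF p(1)] by simp
    have qp: "q \<in> nbr E p" using nbr_sym[OF p(1) p(3)] .
    have "nbr E p = {q}" using d1[OF pE p(2) qp] .
    moreover have "\<forall>r\<in>nbr E q. r \<noteq> p \<longrightarrow> d r \<ge> 3" using pend[OF pE qp p(2)] p(4) by blast
    ultimately show ?thesis using p by blast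
  qed
  have P3: "sum (hh L) {e \<in> L - B. q \<in> e} \<ge> 3/10" if qQ: "q \<in> Q" for q
  proof -
    obtain p where p: "p \<in> nbr E q" "d p = 1" "nbr E p = {q}" "\<forall>r\<in>nbr E q. r \<noteq> p \<longrightarrow> d r \<ge> 3"
      using Qstr[OF qQ] by blast
    have qE: "q \<in> E" "d q = 4" using qQ unfolding Q_def by auto
    define T where "T = {e \<in> L. q \<in> e} - {{p, q}}"
    have pqL: "{p, q} \<in> L" using pairL[OF p(1) qE(1)] by (simp add: insert_commute)
    have "card {e \<in> L. q \<in> e} = 4" using qE(2) unfolding d_def degree_def by simp
    hence cT: "card T = 3" unfolding T_def using pqL finL by (simp add: card_Diff_singleton)
    have Tgood: "e \<in> L - B \<and> hh L e \<ge> 1/10" if eT: "e \<in> T" for e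
    proof -
      have eL: "e \<in> L" "q \<in> e" "e \<noteq> {p, q}" using eT unfolding T_def by auto
      obtain x y where e: "e = {x, y}" "x \<in> E" "y \<in> E" "x \<noteq> y" "y \<in> nbr E x" "x \<in> nbr E y"
        using EL[OF eL(1)] by blast
      obtain r where r: "e = {q, r}" "r \<in> nbr E q"
      proof (cases "q = x")
        case True thus ?thesis using that e by blast
      next
        case False hence "q = y" using e eL by auto
        thus ?thesis using that e by (metis insert_commute)
      qed
      have rp: "r \<noteq> p" using r eL(3) by (auto simp: insert_commute)
      have dr: "d r \<ge> 3" "d r \<le> 6" using p(4) r(2) rp d6 nbrE[OF r(2)] by auto
      have rq: "q \<noteq> r" using nbrE[OF r(2)] by auto
      have hval: "hh L e \<ge> 1/10" using hv[OF rq] r(1) qE(2) Hf_4k[OF dr] by simp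
      have "e \<notin> B"
      proof
        assume "e \<in> B"
        then obtain a b where ab: "e = {a, b}" "d a = 1" "d b = 4" unfolding B_def by blast
        hence "a \<in> {q, r}" using r(1) by auto
        thus False using ab qE dr by auto
      qed
      thus ?thesis using eL hval by simp
    qed
    have "of_nat (card T) * (1/10) \<le> sum (hh L) T" by (rule sum_bounded_below) (use Tgood in auto)
    also have "\<dots> \<le> sum (hh L) {e \<in> L - B. q \<in> e}"
    proof (rule sum_mono2)
      show "finite {e \<in> L - B. q \<in> e}" using finL by simp
      show "T \<subseteq> {e \<in> L - B. q \<in> e}" using Tgood unfolding T_def by blast
      show "0 \<le> hh L b" if "b \<in> {e \<in> L - B. q \<in> e} - T" for b using P1[of b] that by (simp add: less_imp_le)
    qed
    finally show ?thesis using cT by simp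
  qed
  have P4: "card B \<le> card Q"
  proof -
    have "B \<subseteq> (\<Union>q\<in>Q. {e \<in> B. q \<in> e})"
    proof
      fix e assume eB: "e \<in> B"
      then obtain x y where e: "e = {x, y}" "d x = 1" "d y = 4" unfolding B_def by blast
      have xy: "x \<noteq> y" using e by auto
      have eL: "e \<in> L" using eB BL by auto
      obtain a b where ab: "e = {a, b}" "a \<in> E" "b \<in> E" "a \<noteq> b" "b \<in> nbr E a" "a \<in> nbr E b"
        using EL[OF eL] by blast
      have "x \<in> nbr E y \<and> y \<in> E"
        using ab e xy by (auto simp: doubleton_eq_iff)
      hence "y \<in> Q" using e unfolding Q_def by blast
      thus "e \<in> (\<Union>q\<in>Q. {e \<in> B. q \<in> e})" using eB e by blast
    qed
    hence "card B \<le> card (\<Union>q\<in>Q. {e \<in> B. q \<in> e})"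
      using finB finQ by (intro card_mono) auto
    also have "\<dots> \<le> (\<Sum>q\<in>Q. card {e \<in> B. q \<in> e})" by (rule card_UN_le[OF finQ])
    also have "\<dots> \<le> (\<Sum>q\<in>Q. 1)"
    proof (rule sum_mono)
      fix q assume qQ: "q \<in> Q"
      obtain p where p: "p \<in> nbr E q" "d p = 1" "\<forall>r\<in>nbr E q. r \<noteq> p \<longrightarrow> d r \<ge> 3"
        using Qstr[OF qQ] by blast
      have qE: "q \<in> E" "d q = 4" using qQ unfolding Q_def by auto
      have "{e \<in> B. q \<in> e} \<subseteq> {{p, q}}"
      proof
        fix e assume "e \<in> {e \<in> B. q \<in> e}"
        hence eB: "e \<in> B" "q \<in> e" by auto
        then obtain x y where e: "e = {x, y}" "d x = 1" "d y = 4" unfolding B_def by blast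
        have eL: "e \<in> L" using eB BL by auto
        obtain a b where ab: "e = {a, b}" "a \<in> E" "b \<in> E" "a \<noteq> b" "b \<in> nbr E a" "a \<in> nbr E b"
          using EL[OF eL] by blast
        have "q \<noteq> x" using e qE by auto
        hence qy: "q = y" using eB e by auto
        have xy: "x \<noteq> y" using e by auto
        have "x \<in> nbr E q" using ab e xy qy by (auto simp: doubleton_eq_iff)
        hence "x = p"
        proof (rule contrapos_pp)
          assume "x \<noteq> p"
          hence "d x \<ge> 3" using p(3) \<open>x \<in> nbr E q\<close> by blast
          thus "x \<notin> nbr E q" using e(2) by simp
        qed
        thus "e \<in> {{p, q}}" using e qy by simp
      qed
      hence "card {e \<in> B. q \<in> e} \<le> card {{p, q}}" by (intro card_mono) auto
      thus "card {e \<in> B. q \<in> e} \<le> 1" by simp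
    qed
    finally show ?thesis by simp
  qed
  have P5: "sum (hh L) (L - B) \<ge> of_nat (card Q) * (3/20)"
  proof -
    have "(\<Sum>e\<in>L - B. \<Sum>q\<in>{q \<in> Q. q \<in> e}. hh L e / 2) \<le> sum (hh L) (L - B)"
    proof (rule sum_mono)
      fix e assume eLB: "e \<in> L - B"
      obtain x y where e: "e = {x, y}" using EL[OF DiffD1[OF eLB]] by blast
      have "card {q \<in> Q. q \<in> e} \<le> card e" using e by (intro card_mono) auto
      also have "\<dots> \<le> 2" using e by (simp add: card_insert_if)
      finally have c: "real (card {q \<in> Q. q \<in> e}) \<le> 2" by simp
      have hp: "hh L e > 0" using P1[OF eLB] .
      have "(\<Sum>q\<in>{q \<in> Q. q \<in> e}. hh L e / 2) = real (card {q \<in> Q. q \<in> e}) * (hh L e / 2)" by simp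
      also have "\<dots> \<le> 2 * (hh L e / 2)" using c hp by (intro mult_right_mono) auto
      finally show "(\<Sum>q\<in>{q \<in> Q. q \<in> e}. hh L e / 2) \<le> hh L e" by simp
    qed
    moreover have "(\<Sum>e\<in>L - B. \<Sum>q\<in>{q \<in> Q. q \<in> e}. hh L e / 2)
        = (\<Sum>q\<in>Q. \<Sum>e\<in>{e \<in> L - B. q \<in> e}. hh L e / 2)"
      using sum.swap_restrict[of "L - B" Q "\<lambda>e q. hh L e / 2" "\<lambda>e q. q \<in> e"] finL finQ by simp
    moreover have "(\<Sum>q\<in>Q. \<Sum>e\<in>{e \<in> L - B. q \<in> e}. hh L e / 2) \<ge> of_nat (card Q) * (3/20)"
    proof (rule sum_bounded_below)
      fix q assume "q \<in> Q"
      hence "sum (hh L) {e \<in> L - B. q \<in> e} \<ge> 3/10" by (rule P3)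
      thus "3/20 \<le> (\<Sum>e\<in>{e \<in> L - B. q \<in> e}. hh L e / 2)" by (simp add: sum_divide_distrib[symmetric])
    qed
    ultimately show ?thesis by linarith
  qed
  have tot: "sum (hh L) L = sum (hh L) (L - B) + sum (hh L) B"
    by (rule sum.subset_diff[OF BL finL])
  have sB: "sum (hh L) B \<ge> of_nat (card B) * (-1/10)" by (rule sum_bounded_below) (use P2 in auto)
  have "sum (hh L) L > 0"
  proof (cases "Q = {}")
    case True
    hence "card B = 0" using P4 by simp
    hence "B = {}" using finB by simp
    hence "sum (hh L) L = sum (hh L) (L - B)" using tot by simp
    also have "\<dots> > 0" using \<open>B = {}\<close> P1 finL Lne by (intro sum_pos) auto
    finally show ?thesis .
  next
    case False
    hence "card Q > 0" using finQ by (simp add: card_gt_0_iff)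
    moreover have "real (card B) \<le> real (card Q)" using P4 by simp
    ultimately show ?thesis using tot sB P5 by simp
  qed
  thus ?thesis using GA_ABC[of L] unfolding L_def by simp
qed

end
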